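(* Let $\eta\in D$ with $|\eta|=|i|$ and let $a_1\in\mathcal{O}_D^*$ be a pure quaternion. Then $T\big(2(\eta a_1\bar\eta)^{-1}a_1\big)\in\pi\mathcal{O}_k$.
   Context: $k$ is a dyadic local field of characteristic $0$ with ring of integers $\mathcal{O}_k$ and uniformizer $\pi$; $\Delta\in\mathcal{O}_k^*$ is a unit of minimal quadratic defect. $D=\left(\frac{\pi,\Delta}{k}\right)$ is the quaternion division algebra with basis $1,i,j,ij$, $i^2=\pi$, $j^2=\Delta$, $ij=-ji$; $q\mapsto\bar q$ is the canonical involution, $N$ the reduced norm, $T$ the reduced trace, $|q|:=|N(q)|_k$, and $\mathcal{O}_D=\{q:|q|\le1\}$. A pure quaternion is $q$ with $\bar q=-q$. *)

theory Defs
  imports Complex_Main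
begin

text \<open>A (non-archimedean, discretely valued, complete) absolute value on a field of
characteristic 0 whose residue field is finite and in which 2 is not a unit:
i.e. a dyadic local field of characteristic 0 (a finite extension of Q_2).\<close>

definition dyadic_local_field :: "('k::field_char_0 \<Rightarrow> real) \<Rightarrow> bool" where
  "dyadic_local_field absk \<longleftrightarrow>
     (\<forall>x. absk x \<ge> 0) \<and> (\<forall>x. absk x = 0 \<longleftrightarrow> x = 0) \<and>
     (\<forall>x y. absk (x * y) = absk x * absk y) \<and>
     (\<forall>x y. absk (x + y) \<le> max (absk x) (absk y)) \<and>
     \<comment> \<open>discrete and nontrivial: the maximal ideal is principal, generated by some p\<close>
     (\<exists>p. 0 < absk p \<and> absk p < 1 \<and> (\<forall>x. absk x < 1 \<longrightarrow> absk x \<le> absk p)) \<and>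
     \<comment> \<open>complete\<close>
     (\<forall>X :: nat \<Rightarrow> 'k.
        (\<forall>e>0. \<exists>N. \<forall>m\<ge>N. \<forall>n\<ge>N. absk (X m - X n) < e) \<longrightarrow>
        (\<exists>L. \<forall>e>0. \<exists>N. \<forall>n\<ge>N. absk (X n - L) < e)) \<and>
     \<comment> \<open>finite residue field\<close>
     (\<exists>R. finite R \<and> (\<forall>x. absk x \<le> 1 \<longrightarrow> (\<exists>r\<in>R. absk (x - r) < 1))) \<and>
     \<comment> \<open>dyadic: residue characteristic 2\<close>
     absk 2 < 1"

definition Ok :: "('k::field_char_0 \<Rightarrow> real) \<Rightarrow> 'k set" where
  "Ok absk = {x. absk x \<le> 1}"

definition Ok_units :: "('k::field_char_0 \<Rightarrow> real) \<Rightarrow> 'k set" where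
  "Ok_units absk = {x \<in> Ok absk. \<exists>y \<in> Ok absk. x * y = 1}"

definition uniformizer :: "('k::field_char_0 \<Rightarrow> real) \<Rightarrow> 'k \<Rightarrow> bool" where
  "uniformizer absk p \<longleftrightarrow> 0 < absk p \<and> absk p < 1 \<and> (\<forall>x. absk x < 1 \<longrightarrow> absk x \<le> absk p)"

text \<open>Quadratic defect (O'Meara 63A): the intersection of the fractional ideals
  (\<Delta> - x^2) O_k over all x in k.\<close>
definition quad_defect :: "('k::field_char_0 \<Rightarrow> real) \<Rightarrow> 'k \<Rightarrow> 'k set" where
  "quad_defect absk d = (\<Inter>x. {(d - x^2) * y | y. y \<in> Ok absk})"

definition unit_min_quad_defect :: "('k::field_char_0 \<Rightarrow> real) \<Rightarrow> 'k \<Rightarrow> bool" where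
  "unit_min_quad_defect absk d \<longleftrightarrow>
     d \<in> Ok_units absk \<and> quad_defect absk d = {4 * y | y. y \<in> Ok absk}"

text \<open>\<open>Q a b c d\<close> stands for a + b i + c j + d ij.\<close>
datatype 'k quat = Q (re: 'k) (ci: 'k) (cj: 'k) (cij: 'k)

definition qone :: "'k::field quat" where "qone = Q 1 0 0 0"
definition qi :: "'k::field quat" where "qi = Q 0 1 0 0"

definition qscale :: "'k::field \<Rightarrow> 'k quat \<Rightarrow> 'k quat" where
  "qscale s q = Q (s * re q) (s * ci q) (s * cj q) (s * cij q)"

text \<open>Multiplication with i^2 = p, j^2 = dl, ij = -ji.\<close>
definition qmul :: "'k::field \<Rightarrow> 'k \<Rightarrow> 'k quat \<Rightarrow> 'k quat \<Rightarrow> 'k quat" where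
  "qmul p dl x y =
     Q (re x * re y + p * ci x * ci y + dl * cj x * cj y - p * dl * cij x * cij y)
       (re x * ci y + ci x * re y - dl * cj x * cij y + dl * cij x * cj y)
       (re x * cj y + cj x * re y + p * ci x * cij y - p * cij x * ci y)
       (re x * cij y + cij x * re y + ci x * cj y - cj x * ci y)"

definition qconj :: "'k::field quat \<Rightarrow> 'k quat" where
  "qconj q = Q (re q) (- ci q) (- cj q) (- cij q)"

definition qnorm :: "'k::field \<Rightarrow> 'k \<Rightarrow> 'k quat \<Rightarrow> 'k" where
  "qnorm p dl q = re q ^ 2 - p * ci q ^ 2 - dl * cj q ^ 2 + p * dl * cij q ^ 2"

definition qtrace :: "'k::field quat \<Rightarrow> 'k" where
  "qtrace q = 2 * re q"

text \<open>Inverse q^{-1} = conj q / N(q) (junk value 0 for q = 0).\<close>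
definition qinv :: "'k::field \<Rightarrow> 'k \<Rightarrow> 'k quat \<Rightarrow> 'k quat" where
  "qinv p dl q = qscale (inverse (qnorm p dl q)) (qconj q)"

definition qabs :: "('k::field_char_0 \<Rightarrow> real) \<Rightarrow> 'k \<Rightarrow> 'k \<Rightarrow> 'k quat \<Rightarrow> real" where
  "qabs absk p dl q = absk (qnorm p dl q)"

definition OD :: "('k::field_char_0 \<Rightarrow> real) \<Rightarrow> 'k \<Rightarrow> 'k \<Rightarrow> 'k quat set" where
  "OD absk p dl = {q. qabs absk p dl q \<le> 1}"

definition OD_units :: "('k::field_char_0 \<Rightarrow> real) \<Rightarrow> 'k \<Rightarrow> 'k \<Rightarrow> 'k quat set" where
  "OD_units absk p dl = {q \<in> OD absk p dl. \<exists>r \<in> OD absk p dl.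
       qmul p dl q r = qone \<and> qmul p dl r q = qone}"

definition pure_quat :: "'k::field quat \<Rightarrow> bool" where
  "pure_quat q \<longleftrightarrow> qconj q = Q (- re q) (- ci q) (- cj q) (- cij q)"

end

theory Submission imports Defs begin

locale dlf =
  fixes absk :: "'k::field_char_0 \<Rightarrow> real" and p :: 'k
  assumes D: "dyadic_local_field absk" and U: "uniformizer absk p"
begin

lemma nonneg[simp]: "absk x \<ge> 0" using D unfolding dyadic_local_field_def by blast
lemma zero_iff[simp]: "absk x = 0 \<longleftrightarrow> x = 0" using D unfolding dyadic_local_field_def by blast
lemma mult[simp]: "absk (x * y) = absk x * absk y" using D unfolding dyadic_local_field_def by blast
lemma ultra: "absk (x + y) \<le> max (absk x) (absk y)" using D unfolding dyadic_local_field_def by blast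
lemma two_lt: "absk 2 < 1" using D unfolding dyadic_local_field_def by blast
lemma p_pos: "0 < absk p" using U unfolding uniformizer_def by blast
lemma p_lt1: "absk p < 1" using U unfolding uniformizer_def by blast
lemma disc: "absk x < 1 \<Longrightarrow> absk x \<le> absk p" using U unfolding uniformizer_def by blast

lemma one[simp]: "absk 1 = 1"
proof -
  have "absk 1 = absk 1 * absk 1" using mult[of 1 1] by simp
  moreover have "absk 1 \<noteq> 0" by simp
  ultimately show ?thesis by (metis mult_cancel_left1)
qed

lemma neg[simp]: "absk (- x) = absk x"
proof -
  have "absk (-1) * absk (-1) = 1" using mult[of "-1" "-1"] by simp
  hence "absk (-1) = 1" using nonneg[of "-1"]
    by (metis abs_of_nonneg mult_cancel_right1 mult_eq_0_iff one_neq_zero real_sqrt_abs2 real_sqrt_mult_self)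
  thus ?thesis using mult[of "-1" x] by simp
qed

lemma abs0[simp]: "absk 0 = 0" by simp
lemma pow2[simp]: "absk (x ^ 2) = absk x ^ 2" by (simp add: power2_eq_square)

lemma inv[simp]: "absk (inverse x) = inverse (absk x)"
proof (cases "x = 0")
  case False
  have "absk x * absk (inverse x) = 1" using mult[of x "inverse x"] False by (simp del: mult)
  thus ?thesis by (metis inverse_unique)
qed simp

lemma divi[simp]: "absk (x / y) = absk x / absk y"
  by (simp add: divide_inverse)

lemma ultra_diff: "absk (x - y) \<le> max (absk x) (absk y)"
  using ultra[of x "-y"] by simp

lemma add_le: "absk x \<le> C \<Longrightarrow> absk y \<le> C \<Longrightarrow> absk (x + y) \<le> C"
  using ultra[of x y] by simp
lemma diff_le: "absk x \<le> C \<Longrightarrow> absk y \<le> C \<Longrightarrow> absk (x - y) \<le> C"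
  using ultra_diff[of x y] by simp
lemma mul_le: "absk x \<le> A \<Longrightarrow> absk y \<le> B \<Longrightarrow> absk (x * y) \<le> A * B"
  by (simp add: mult_mono order_trans[OF nonneg])

lemma two_le_p: "absk 2 \<le> absk p" using disc two_lt by blast

lemma strict: assumes "absk y < absk x" shows "absk (x + y) = absk x"
proof -
  have "absk (x + y) \<le> absk x" using ultra[of x y] assms by simp
  moreover have "absk x \<le> max (absk (x + y)) (absk y)" using ultra_diff[of "x+y" y] by simp
  ultimately show ?thesis using assms by linarith
qed

lemma neq_max: assumes "absk x \<noteq> absk y" shows "absk (x + y) = max (absk x) (absk y)"
proof (cases "absk y < absk x")
  case True thus ?thesis using strict by simp
next
  case False hence "absk x < absk y" using assms by simp
  thus ?thesis using strict[of x y] by (simp add: add.commute max_def)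
qed

lemma unit_sq: assumes "absk p * absk u ^ 2 \<le> 1" shows "absk u \<le> 1"
proof (rule ccontr)
  assume "\<not> absk u \<le> 1"
  hence u1: "absk u > 1" by simp
  hence "u \<noteq> 0" by auto
  have "absk (inverse u) < 1" using u1 by (simp add: inverse_less_1_iff)
  hence "inverse (absk u) \<le> absk p" using disc by fastforce
  hence "1 \<le> absk p * absk u" using u1 by (simp add: field_simps)
  hence "absk u \<le> absk p * absk u * absk u" using u1 by (simp add: mult_le_cancel_right1)
  also have "\<dots> \<le> 1" using assms by (simp add: power2_eq_square mult.assoc)
  finally show False using u1 by simp
qed


lemma four_pos: "0 < absk 4"
proof -
  have "(4::'k) \<noteq> 0" by simp
  thus ?thesis using nonneg[of 4] zero_iff[of 4] by linarith
qed
lemma four_lt: "absk 4 < 1"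
proof -
  have "absk 4 = absk 2 * absk 2" using mult[of 2 2] by simp
  moreover have "absk 2 * absk 2 \<le> absk 2" using two_lt nonneg[of 2] by (simp add: mult_left_le_one_le)
  ultimately show ?thesis using two_lt by linarith
qed
lemma four_le: "absk 4 \<le> absk p * absk p"
proof -
  have "absk 4 = absk 2 * absk 2" using mult[of 2 2] by simp
  thus ?thesis using two_le_p by (simp add: mult_mono)
qed

end

locale dq = dlf +
  fixes dl x0 :: "'k::field_char_0"
  assumes dl1: "absk dl = 1" and lb: "\<And>x. absk 4 \<le> absk (dl - x^2)"
    and ub: "absk (x0^2 - dl) \<le> absk 4"
begin

lemma x0_1: "absk x0 = 1"
proof -
  have "absk (x0^2 - dl) < absk dl" using ub four_lt dl1 by simp
  hence "absk (dl + (x0^2 - dl)) = absk dl" by (rule strict)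
  hence "absk x0 ^ 2 = 1" using dl1 by simp
  thus ?thesis using nonneg[of x0] by (simp add: power2_eq_1_iff)
qed

lemma normA: "absk (a^2 - dl*c^2) = (max (absk (a - c*x0)) (absk (2*c)))^2"
proof -
  define r where "r = a - c*x0"
  define s where "s = 2*c"
  define m where "m = (x0^2 - dl)/4"
  define M where "M = max (absk r) (absk s)"
  have idn: "a^2 - dl*c^2 = r^2 + (x0*r*s + m*s^2)"
    unfolding r_def s_def m_def by (simp add: field_simps power2_eq_square)
  have m1: "absk m \<le> 1" unfolding m_def using ub four_pos by simp
  have M0: "0 \<le> M" unfolding M_def by (simp add: le_max_iff_disj)
  have rM: "absk r \<le> M" and sM: "absk s \<le> M" unfolding M_def by auto
  have up: "absk (a^2 - dl*c^2) \<le> M^2"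
  proof -
    have "absk (r^2) \<le> M^2" using rM by (simp add: power_mono)
    moreover have "absk (x0*r*s) \<le> M^2" using rM sM x0_1 M0
      by (simp add: power2_eq_square mult_mono)
    moreover have "absk (m*s^2) \<le> M^2"
    proof -
      have "absk (s^2) \<le> M^2" using sM by (simp add: power_mono)
      thus ?thesis using m1 mul_le[of m 1 "s^2" "M^2"] by simp
    qed
    ultimately show ?thesis unfolding idn by (intro add_le)
  qed
  have low: "M^2 \<le> absk (a^2 - dl*c^2)"
  proof (cases "absk s < absk r")
    case True
    hence M: "M = absk r" unfolding M_def by simp
    have "absk (x0*r*s) < absk r ^ 2" using True x0_1
      by (simp add: power2_eq_square mult_strict_left_mono order_le_less_trans[OF nonneg True])
    moreover have "absk (m*s^2) < absk r ^ 2"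
    proof -
      have "absk s ^ 2 < absk r ^ 2" using True by (simp add: power_strict_mono)
      moreover have "absk (m*s^2) \<le> absk s ^ 2" using m1 by (simp add: mult_left_le_one_le)
      ultimately show ?thesis by simp
    qed
    ultimately have "absk (x0*r*s + m*s^2) < absk (r^2)"
      using ultra[of "x0*r*s" "m*s^2"] by simp
    hence "absk (r^2 + (x0*r*s + m*s^2)) = absk (r^2)" by (rule strict)
    thus ?thesis unfolding idn M by simp
  next
    case False
    hence M: "M = absk s" unfolding M_def by simp
    show ?thesis
    proof (cases "s = 0")
      case True thus ?thesis using M by simp
    next
      case s0: False
      define t where "t = r / s"
      define q where "q = t^2 + x0*t + m"
      have "r^2 + (x0*r*s + m*s^2) = s^2 * q" unfolding q_def t_def using s0
        by (simp add: field_simps power2_eq_square)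
      moreover have "1 \<le> absk q"
      proof -
        have "4 * q = -(dl - (2*t + x0)^2)" unfolding q_def m_def by (simp add: field_simps power2_eq_square)
        hence "absk 4 * absk q = absk (dl - (2*t + x0)^2)" using mult[of 4 q] neg by metis
        hence "absk 4 \<le> absk 4 * absk q" using lb by simp
        thus ?thesis using four_pos by simp
      qed
      ultimately show ?thesis unfolding idn M
        by (simp add: mult_le_cancel_left1 mult_le_cancel_left2)
    qed
  qed
  show ?thesis using up low unfolding M_def r_def s_def by simp
qed


lemma max_ex: "\<exists>u. absk u = max (absk x) (absk y)"
  by (cases "absk x \<le> absk y") (auto simp: max_def)

lemma no_eq: assumes "absk u1 ^ 2 = absk p * absk u2 ^ 2" shows "u2 = 0"
proof (rule ccontr)
  assume u2: "u2 \<noteq> 0"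
  define v where "v = u1 / u2"
  have v2: "absk v ^ 2 = absk p" unfolding v_def using assms u2 by (simp add: power_divide)
  hence "absk v ^ 2 < 1" using p_lt1 by simp
  hence "absk v < 1" using nonneg[of v] by (simp add: power_less_one_iff)
  hence "absk v \<le> absk p" by (rule disc)
  hence "absk v ^ 2 \<le> absk p ^ 2" using nonneg[of v] by (simp add: power_mono)
  hence "absk p \<le> absk p * absk p" using v2 by (simp add: power2_eq_square)
  thus False using p_pos p_lt1 by simp
qed

lemma normQ: "absk (qnorm p dl (Q a b c d)) =
   max ((max (absk (a - c*x0)) (absk (2*c)))^2) (absk p * (max (absk (b - d*x0)) (absk (2*d)))^2)"
proof -
  define X where "X = a^2 - dl*c^2"
  define Y where "Y = b^2 - dl*d^2"
  have qn: "qnorm p dl (Q a b c d) = X + (- (p * Y))" unfolding qnorm_def X_def Y_def by (simp add: algebra_simps)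
  obtain u1 where u1: "absk u1 = max (absk (a - c*x0)) (absk (2*c))" using max_ex by blast
  obtain u2 where u2: "absk u2 = max (absk (b - d*x0)) (absk (2*d))" using max_ex by blast
  have hX: "absk X = absk u1 ^ 2" unfolding X_def u1 by (rule normA)
  have hY: "absk (- (p * Y)) = absk p * absk u2 ^ 2" unfolding Y_def u2 by (simp add: normA)
  show ?thesis
  proof (cases "absk X = absk (- (p * Y))")
    case False
    have "absk (X + - (p*Y)) = max (absk u1 ^2) (absk p * absk u2^2)"
      by (simp only: neq_max[OF False] hX hY)
    thus ?thesis unfolding qn u1 u2 .
  next
    case True
    hence e: "absk u1 ^ 2 = absk p * absk u2 ^ 2" using hX hY by (simp only:)
    hence z2: "u2 = 0" by (rule no_eq)
    hence z1: "u1 = 0" using e by simp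
    have "X = 0" using hX z1 by simp
    moreover have "- (p * Y) = 0" using hY z2 zero_iff by (metis abs0 mult_zero_right power_zero_numeral)
    ultimately have "qnorm p dl (Q a b c d) = 0" unfolding qn by simp
    thus ?thesis using z1 z2 u1[symmetric] u2[symmetric] by simp
  qed
qed


lemma sq_le1: "x ^ 2 \<le> (1::real) \<Longrightarrow> 0 \<le> x \<Longrightarrow> x \<le> 1"
  by (metis abs_of_nonneg abs_square_le_1)

lemma main_dq:
  assumes eta: "absk (qnorm p dl (Q e0 e1 e2 e3)) = absk p"
    and a1: "absk (qnorm p dl (Q 0 b c d)) = 1"
  shows "absk (4 * re (qmul p dl (qconj (qmul p dl (qmul p dl (Q e0 e1 e2 e3) (Q 0 b c d)) (qconj (Q e0 e1 e2 e3)))) (Q 0 b c d)))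
      \<le> absk p ^ 3"
proof -
  have p0: "0 \<le> absk p" by simp
  have two1: "absk 2 \<le> 1" using two_lt by simp
  have a1': "max ((max (absk (0 - c*x0)) (absk (2*c)))^2) (absk p * (max (absk (b - d*x0)) (absk (2*d)))^2) = 1"
    using a1 normQ by simp
  have c1: "absk c \<le> 1"
  proof -
    have "(max (absk (0 - c*x0)) (absk (2*c)))^2 \<le> 1" using a1' by simp
    hence "absk c ^ 2 \<le> 1" using x0_1 by (simp add: power_mono le_max_iff_disj order_trans[OF power_mono])
      (smt (verit, del_insts) nonneg power_mono)
    thus ?thesis using sq_le1 by simp
  qed
  have hb: "absk (b - d*x0) \<le> 1"
  proof (rule unit_sq)
    have "absk p * (max (absk (b - d*x0)) (absk (2*d)))^2 \<le> 1" using a1' by simp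
    thus "absk p * absk (b - d*x0) ^ 2 \<le> 1"
      by (smt (verit) max.cobounded1 mult_left_mono nonneg p0 power_mono)
  qed
  have hd: "absk (2*d) \<le> 1"
  proof (rule unit_sq)
    have "absk p * (max (absk (b - d*x0)) (absk (2*d)))^2 \<le> 1" using a1' by simp
    thus "absk p * absk (2*d) ^ 2 \<le> 1"
      by (smt (verit) max.cobounded2 mult_left_mono nonneg p0 power_mono)
  qed
  have eta': "max ((max (absk (e0 - e2*x0)) (absk (2*e2)))^2) (absk p * (max (absk (e1 - e3*x0)) (absk (2*e3)))^2) = absk p"
    using eta normQ by simp
  have M2e: "(max (absk (e1 - e3*x0)) (absk (2*e3)))^2 \<le> 1"
  proof -
    have "absk p * (max (absk (e1 - e3*x0)) (absk (2*e3)))^2 \<le> absk p * 1" using eta' by simp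
    thus ?thesis using p_pos by simp
  qed
  have he1: "absk (e1 - e3*x0) \<le> 1"
    using M2e by (smt (verit) max.cobounded1 nonneg power_mono sq_le1)
  have he3: "absk (2*e3) \<le> 1"
    using M2e by (smt (verit) max.cobounded2 nonneg power_mono sq_le1)
  have he2: "absk (2*e2) \<le> absk p"
  proof (rule disc)
    have "(max (absk (e0 - e2*x0)) (absk (2*e2)))^2 < 1" using eta' p_lt1 by simp
    hence "absk (2*e2) ^ 2 < 1"
      by (smt (verit) max.cobounded2 nonneg power_mono)
    thus "absk (2*e2) < 1" using nonneg[of "2*e2"] by (simp add: power_less_one_iff)
  qed
  define m where "m = (x0^2 - dl)/4"
  have m1: "absk m \<le> 1" unfolding m_def using ub four_pos by simp
  have dlm: "dl = x0^2 - 4*m" unfolding m_def by (simp add: field_simps)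
  have h2m: "absk (2*m) \<le> 1" using two1 m1 mul_le[of 2 1 m 1] by simp
  have h2e1: "absk (2*e1) \<le> 1"
  proof -
    have "2*e1 = 2*(e1 - e3*x0) + x0*(2*e3)" by (simp add: algebra_simps)
    moreover have "absk (2*(e1 - e3*x0)) \<le> 1" using mul_le[OF two1 he1] by simp
    moreover have "absk (x0*(2*e3)) \<le> 1" using x0_1 he3 by simp
    ultimately show ?thesis by (metis add_le)
  qed
  have h2b: "absk (2*b) \<le> 1"
  proof -
    have "2*b = 2*(b - d*x0) + x0*(2*d)" by (simp add: algebra_simps)
    moreover have "absk (2*(b - d*x0)) \<le> 1" using mul_le[OF two1 hb] by simp
    moreover have "absk (x0*(2*d)) \<le> 1" using x0_1 hd by simp
    ultimately show ?thesis by (metis add_le)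
  qed
  define w1 where "w1 = dl*(e3*c - e2*d)"
  define w2 where "w2 = p*(e1*d - e3*b)"
  define w3 where "w3 = e1*c - e2*b"
  have I: "absk (2*w2) \<le> absk p"
  proof -
    have "2*w2 = p * ((e1 - e3*x0)*(2*d) - (2*e3)*(b - d*x0))" unfolding w2_def by (simp add: algebra_simps)
    moreover have "absk ((e1 - e3*x0)*(2*d) - (2*e3)*(b - d*x0)) \<le> 1"
      using mul_le[OF he1 hd] mul_le[OF he3 hb] by (intro diff_le) simp_all
    ultimately show ?thesis using mul_le[of p "absk p", OF order_refl] by fastforce
  qed
  have II: "absk (2*(2*w3)) \<le> absk p"
  proof -
    have "2*(2*w3) = 2*(c*(2*e1)) - (2*e2)*(2*b)" unfolding w3_def by (simp add: algebra_simps)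
    moreover have "absk (2*(c*(2*e1))) \<le> absk p"
      using mul_le[OF two_le_p mul_le[OF c1 h2e1]] by simp
    moreover have "absk ((2*e2)*(2*b)) \<le> absk p" using mul_le[OF he2 h2b] by simp
    ultimately show ?thesis by (metis diff_le)
  qed
  have III: "absk (2*w1 - (2*w3)*x0) \<le> absk p"
  proof -
    have "2*w1 - (2*w3)*x0 = (- (2*(c*x0*(e1 - e3*x0))) - 2*(c*(2*e3)*(2*m))) + ((2*e2)*(x0*(b - d*x0)) + (2*e2)*((2*d)*(2*m)))"
      unfolding w1_def w3_def dlm by (simp add: algebra_simps power2_eq_square)
    moreover have "absk (2*(c*x0*(e1 - e3*x0))) \<le> absk p"
    proof -
      have "absk (c*x0*(e1 - e3*x0)) \<le> 1" using c1 he1 x0_1 mul_le[OF c1 he1] by simp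
      thus ?thesis using two_le_p mul_le[OF two_le_p] by fastforce
    qed
    moreover have "absk (2*(c*(2*e3)*(2*m))) \<le> absk p"
    proof -
      have "absk (c*(2*e3)*(2*m)) \<le> 1" using mul_le[OF mul_le[OF c1 he3] h2m] by simp
      thus ?thesis using two_le_p mul_le[OF two_le_p] by fastforce
    qed
    moreover have "absk ((2*e2)*(x0*(b - d*x0))) \<le> absk p"
      using mul_le[OF he2, of "x0*(b - d*x0)" 1] x0_1 hb by simp
    moreover have "absk ((2*e2)*((2*d)*(2*m))) \<le> absk p"
      using mul_le[OF he2 mul_le[OF hd h2m]] by simp
    ultimately show ?thesis by (metis add_le diff_le neg)
  qed
  define Nw where "Nw = - p*w1^2 - dl*w2^2 + p*dl*w3^2"
  have N4: "absk (4*Nw) \<le> absk p ^ 2"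
  proof -
    have "4*Nw = - (dl*(2*w2)^2) - p*((2*w1)^2 - dl*(2*w3)^2)"
      unfolding Nw_def by (simp add: algebra_simps power2_eq_square)
    moreover have "absk (dl*(2*w2)^2) \<le> absk p ^ 2"
    proof -
      have "absk (dl*(2*w2)^2) = absk (2*w2) ^ 2" by (simp only: mult pow2 dl1 mult_1)
      thus ?thesis using power_mono[OF I nonneg[of "2*w2"]] by simp
    qed
    moreover have "absk (p*((2*w1)^2 - dl*(2*w3)^2)) \<le> absk p ^ 2"
    proof -
      have "absk ((2*w1)^2 - dl*(2*w3)^2) = (max (absk (2*w1 - (2*w3)*x0)) (absk (2*(2*w3))))^2"
        by (rule normA)
      also have "\<dots> \<le> absk p ^ 2"
        by (rule power_mono[OF max.boundedI[OF III II]]) (simp add: le_max_iff_disj)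
      finally have "absk ((2*w1)^2 - dl*(2*w3)^2) \<le> absk p ^ 2" .
      hence "absk (p*((2*w1)^2 - dl*(2*w3)^2)) \<le> absk p * absk p ^ 2"
        by (simp add: mult_left_mono)
      also have "\<dots> \<le> absk p ^ 2" using p_lt1 by (simp add: mult_left_le_one_le)
      finally show ?thesis .
    qed
    ultimately show ?thesis by (metis diff_le neg)
  qed
  have kid: "4 * re (qmul p dl (qconj (qmul p dl (qmul p dl (Q e0 e1 e2 e3) (Q 0 b c d)) (qconj (Q e0 e1 e2 e3)))) (Q 0 b c d))
     = - (2 * (4*Nw)) + 4 * qnorm p dl (Q e0 e1 e2 e3) * qnorm p dl (Q 0 b c d)"
    unfolding Nw_def w1_def w2_def w3_def
    by (simp add: qnorm_def qmul_def qconj_def power2_eq_square algebra_simps)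
  have t1: "absk (- (2 * (4*Nw))) \<le> absk p ^ 3"
  proof -
    have "absk (2 * (4*Nw)) \<le> absk p * absk p ^ 2" using mul_le[OF two_le_p N4] by simp
    thus ?thesis by (simp add: power3_eq_cube power2_eq_square)
  qed
  have t2: "absk (4 * qnorm p dl (Q e0 e1 e2 e3) * qnorm p dl (Q 0 b c d)) \<le> absk p ^ 3"
  proof -
    have "absk (4 * qnorm p dl (Q e0 e1 e2 e3) * qnorm p dl (Q 0 b c d)) = absk 4 * absk p"
      using eta a1 by simp
    also have "\<dots> \<le> absk p * absk p * absk p" using four_le p_pos by simp
    finally show ?thesis by (simp add: power3_eq_cube)
  qed
  show ?thesis unfolding kid using t1 t2 by (rule add_le)
qed

end

lemma (in dlf) x0_exists:
  assumes "unit_min_quad_defect absk dl"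
  shows "absk dl = 1" and "\<forall>x. absk 4 \<le> absk (dl - x^2)" and "\<exists>x0. absk (x0^2 - dl) \<le> absk 4"
proof -
  have u: "dl \<in> Ok_units absk" and qd: "quad_defect absk dl = {4 * y | y. y \<in> Ok absk}"
    using assms unfolding unit_min_quad_defect_def by auto
  from u obtain y where dle: "absk dl \<le> 1" and y1: "absk y \<le> 1" and dy: "dl * y = 1"
    unfolding Ok_units_def Ok_def by auto
  have "absk dl * absk y = 1" using dy mult[of dl y] by simp
  thus d1: "absk dl = 1" using dle y1 nonneg[of dl] mult_left_le[of "absk y" "absk dl"]
    by linarith
  have "4 \<in> quad_defect absk dl" unfolding qd Ok_def by force
  hence four_in: "\<And>x. \<exists>y. 4 = (dl - x^2) * y \<and> absk y \<le> 1"
    unfolding quad_defect_def Ok_def by blast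
  show lbx: "\<forall>x. absk 4 \<le> absk (dl - x^2)"
  proof
    fix x
    obtain y where "4 = (dl - x^2) * y" "absk y \<le> 1" using four_in by blast
    hence "absk 4 = absk (dl - x^2) * absk y" by (metis mult)
    thus "absk 4 \<le> absk (dl - x^2)" using \<open>absk y \<le> 1\<close> nonneg[of "dl - x^2"]
      by (simp add: mult_left_le)
  qed
  have pn: "p \<noteq> 0" using p_pos by auto
  have "4 / p \<notin> {4 * y | y. y \<in> Ok absk}"
  proof
    assume "4 / p \<in> {4 * y | y. y \<in> Ok absk}"
    then obtain y where "4 / p = 4 * y" "absk y \<le> 1" unfolding Ok_def by auto
    hence "y = 1 / p" using pn by (simp add: field_simps)
    hence "1 / absk p \<le> 1" using \<open>absk y \<le> 1\<close> by simp
    thus False using p_pos p_lt1 by (simp add: field_simps)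
  qed
  hence "4 / p \<notin> quad_defect absk dl" unfolding qd .
  then obtain x where nx: "4 / p \<notin> {(dl - x^2) * y | y. y \<in> Ok absk}"
    unfolding quad_defect_def by blast
  define z where "z = dl - x^2"
  have z0: "z \<noteq> 0" using lbx four_pos unfolding z_def by (metis abs0 not_le)
  have "absk z < absk 4 / absk p"
  proof (rule ccontr)
    assume "\<not> absk z < absk 4 / absk p"
    hence "absk 4 \<le> absk p * absk z" using p_pos by (simp add: field_simps)
    moreover have "0 < absk p * absk z" using z0 p_pos nonneg[of z] zero_iff[of z]
      by (metis less_eq_real_def mult_pos_pos)
    ultimately have "absk (4 / p / z) \<le> 1" by (simp add: divide_le_eq_1)
    moreover have "4 / p = z * (4 / p / z)" using z0 by simp
    ultimately show False using nx unfolding z_def Ok_def by blast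
  qed
  hence "absk (z * p / 4) < 1" using p_pos four_pos by (simp add: field_simps)
  hence "absk (z * p / 4) \<le> absk p" by (rule disc)
  hence "absk z \<le> absk 4" using p_pos four_pos by (simp add: field_simps)
  moreover have "absk (x^2 - dl) = absk z" unfolding z_def by (metis minus_diff_eq neg)
  ultimately have "absk (x^2 - dl) \<le> absk 4" by simp
  thus "\<exists>x0. absk (x0^2 - dl) \<le> absk 4" by blast
qed

lemma target_eq:
  "qtrace (qmul p dl (qscale 2 (qinv p dl X)) Y) = inverse (qnorm p dl X) * (4 * re (qmul p dl (qconj X) Y))"
  by (cases X; cases Y) (simp add: qtrace_def qmul_def qscale_def qinv_def qconj_def algebra_simps)

theorem lemma5p7:
  fixes absk :: "'k::field_char_0 \<Rightarrow> real" and p dl :: 'k and eta a1 :: "'k quat"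
  assumes "dyadic_local_field absk"
    and "uniformizer absk p"
    and "unit_min_quad_defect absk dl"
    and "qabs absk p dl eta = qabs absk p dl qi"
    and "a1 \<in> OD_units absk p dl"
    and "pure_quat a1"
  shows "qtrace (qmul p dl
            (qscale 2 (qinv p dl (qmul p dl (qmul p dl eta a1) (qconj eta)))) a1)
         \<in> {p * y | y. y \<in> Ok absk}"
proof -
  interpret dlf absk p using assms(1,2) by unfold_locales
  obtain x0 where x0: "absk (x0^2 - dl) \<le> absk 4" using x0_exists(3)[OF assms(3)] by blast
  interpret dq absk p dl x0
    using x0_exists(1,2)[OF assms(3)] x0 by unfold_locales auto
  obtain e0 e1 e2 e3 where E: "eta = Q e0 e1 e2 e3" by (cases eta)
  obtain a0 b c d where A0: "a1 = Q a0 b c d" by (cases a1)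
  have "a0 = 0" using assms(6) unfolding A0 pure_quat_def qconj_def by simp
  hence A: "a1 = Q 0 b c d" using A0 by simp
  have Ne: "absk (qnorm p dl eta) = absk p"
    using assms(4) unfolding qabs_def qi_def qnorm_def by simp
  obtain r where a1le: "absk (qnorm p dl a1) \<le> 1" and rle: "absk (qnorm p dl r) \<le> 1"
    and ar: "qmul p dl a1 r = qone"
    using assms(5) unfolding OD_units_def OD_def qabs_def by auto
  have "qnorm p dl (qmul p dl a1 r) = qnorm p dl a1 * qnorm p dl r"
    by (cases a1; cases r) (simp add: qnorm_def qmul_def power2_eq_square algebra_simps)
  moreover have "qnorm p dl qone = 1" by (simp add: qone_def qnorm_def)
  ultimately have "qnorm p dl a1 * qnorm p dl r = 1" using ar by simp
  hence "absk (qnorm p dl a1) * absk (qnorm p dl r) = 1" by (metis mult one)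
  hence Na: "absk (qnorm p dl a1) = 1" using a1le rle nonneg[of "qnorm p dl a1"]
      mult_left_le[of "absk (qnorm p dl r)" "absk (qnorm p dl a1)"]
    by linarith
  define B where "B = qmul p dl (qmul p dl eta a1) (qconj eta)"
  have NB: "qnorm p dl B = qnorm p dl eta * qnorm p dl a1 * qnorm p dl eta"
    unfolding B_def E A by (simp add: qnorm_def qmul_def qconj_def power2_eq_square algebra_simps)
  have aNB: "absk (qnorm p dl B) = absk p ^ 2" using NB Ne Na by (simp add: power2_eq_square)
  have R: "absk (4 * re (qmul p dl (qconj B) a1)) \<le> absk p ^ 3"
    unfolding B_def E A using main_dq Ne Na unfolding E A by blast
  define t where "t = qtrace (qmul p dl (qscale 2 (qinv p dl B)) a1)"
  have "absk t = absk (4 * re (qmul p dl (qconj B) a1)) / absk p ^ 2"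
    unfolding t_def target_eq using aNB by (simp add: divide_inverse mult.commute)
  also have "\<dots> \<le> absk p ^ 3 / absk p ^ 2" using R p_pos by (simp add: divide_right_mono)
  also have "\<dots> = absk p" using p_pos by (simp add: power2_eq_square power3_eq_cube)
  finally have tle: "absk t \<le> absk p" .
  have pn: "p \<noteq> 0" using p_pos by auto
  have "t = p * (t / p)" using pn by simp
  moreover have "t / p \<in> Ok absk" unfolding Ok_def using tle p_pos by (simp add: field_simps)
  ultimately have "t \<in> {p * y | y. y \<in> Ok absk}" by blast
  thus ?thesis unfolding t_def B_def .
qed

end
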